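(* Let $\alpha\colon\Gamma\curvearrowright(X,\mu)$ and $\beta\colon\Gamma\curvearrowright(Y,\nu)$ be p.m.p. actions. For every finite $S\subseteq\Gamma$, $k\in\mathbb{N}^+$ and $\epsilon>0$ there exists $N\in\mathbb{N}^+$ such that $\{M^{\alpha\times\beta}_{S,k}(f): f\in\mathrm{Step}_{k,N}(X,\mu;Y,\nu)\}$ is an $\epsilon$-net in $C^{\alpha\times\beta}_{S,k}$ with respect to $\mathrm{dist}_\infty$; let $N_{S,k}(\alpha,\beta,\epsilon)$ denote the least such $N$. Moreover, if $\tilde\alpha,\tilde\beta$ are p.m.p. actions with $\alpha\simeq\tilde\alpha$ and $\beta\simeq\tilde\beta$, then $N_{S,k}(\alpha,\beta,\epsilon)=N_{S,k}(\tilde\alpha,\tilde\beta,\epsilon)$; i.e., $N_{S,k}$ depends only on the weak equivalence classes of $\alpha$ and $\beta$.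
   Context: $\Gamma$ is a countably infinite group; p.m.p. actions are measure-preserving actions on standard probability spaces; $\alpha\times\beta$ is the diagonal product action on $(X\times Y,\mu\times\nu)$. Each $k\in\mathbb{N}^+$ is identified with $\{0,\dots,k-1\}$; $\mathrm{Meas}_k(X,\mu)$ is the set of measurable maps $X\to k$. For finite $S\subseteq\Gamma$, $M^\alpha_{S,k}(f)(\gamma,i,j)=\mu(\{x: f(x)=i, f(\gamma\cdot x)=j\})$, and $C^\alpha_{S,k}$ is the closure in $[0,1]^{S\times k\times k}$ of $\{M^\alpha_{S,k}(f): f\in\mathrm{Meas}_k(X,\mu)\}$; $\mathrm{dist}_\infty$ is the sup-metric. $\alpha\simeq\beta$ (weak equivalence) means $C^\alpha_{S,k}=C^\beta_{S,k}$ for all finite $S$ and all $k$. An $N$-step function is a map $f\in\mathrm{Meas}_k(X\times Y,\mu\times\nu)$ of the form $f(x,y)=\phi(g(x),h(y))$ with $g\in\mathrm{Meas}_N(X,\mu)$, $h\in\mathrm{Meas}_N(Y,\nu)$, $\phi\colon N\times N\to k$; $\mathrm{Step}_{k,N}(X,\mu;Y,\nu)$ is the set of these. A subset $A$ of a metric space $B$ is an $\epsilon$-net if every point of $B$ is at distance $<\epsilon$ from some point of $A$. *)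

theory Defs
  imports "HOL-Probability.Probability" "HOL-Library.Infinite_Typeclass" "HOL-Library.Countable"
begin

text \<open>A p.m.p. action of the group 'g on a standard probability space.  A standard
  Borel space is modelled as a Polish type with its Borel sigma-algebra.\<close>
definition pmp_action :: "'x::polish_space measure \<Rightarrow> ('g::group_add \<Rightarrow> 'x \<Rightarrow> 'x) \<Rightarrow> bool" where
  "pmp_action M a \<longleftrightarrow> prob_space M \<and> sets M = sets borel \<and>
     (\<forall>g. a g \<in> M \<rightarrow>\<^sub>M M \<and> distr M M (a g) = M) \<and>
     (\<forall>x. a 0 x = x) \<and> (\<forall>g h x. a (g + h) x = a g (a h x))"

definition prod_act :: "('g \<Rightarrow> 'x \<Rightarrow> 'x) \<Rightarrow> ('g \<Rightarrow> 'y \<Rightarrow> 'y) \<Rightarrow> 'g \<Rightarrow> 'x \<times> 'y \<Rightarrow> 'x \<times> 'y" where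
  "prod_act a b g p = (a g (fst p), b g (snd p))"

definition Meas :: "nat \<Rightarrow> 'x measure \<Rightarrow> ('x \<Rightarrow> nat) set" where
  "Meas k M = M \<rightarrow>\<^sub>M count_space {..<k}"

text \<open>M^a_{S,k}(f), a point of [0,1]^{S\<times>k\<times>k}; coordinates outside S\<times>k\<times>k are set to 0.\<close>
definition Mat :: "'x measure \<Rightarrow> ('g \<Rightarrow> 'x \<Rightarrow> 'x) \<Rightarrow> 'g set \<Rightarrow> nat \<Rightarrow> ('x \<Rightarrow> nat)
    \<Rightarrow> ('g \<times> nat \<times> nat \<Rightarrow> real)" where
  "Mat M a S k f = (\<lambda>(g, i, j). if g \<in> S \<and> i < k \<and> j < k
      then measure M {x \<in> space M. f x = i \<and> f (a g x) = j} else 0)"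

definition Cset :: "'x measure \<Rightarrow> ('g \<Rightarrow> 'x \<Rightarrow> 'x) \<Rightarrow> 'g set \<Rightarrow> nat \<Rightarrow> ('g \<times> nat \<times> nat \<Rightarrow> real) set" where
  "Cset M a S k = closure (Mat M a S k ` Meas k M)"

definition dist_inf :: "'g set \<Rightarrow> nat \<Rightarrow> ('g \<times> nat \<times> nat \<Rightarrow> real) \<Rightarrow> ('g \<times> nat \<times> nat \<Rightarrow> real) \<Rightarrow> real" where
  "dist_inf S k u v = Max (insert 0 ((\<lambda>p. \<bar>u p - v p\<bar>) ` (S \<times> {..<k} \<times> {..<k})))"

definition is_net :: "'g set \<Rightarrow> nat \<Rightarrow> real \<Rightarrow> ('g \<times> nat \<times> nat \<Rightarrow> real) set \<Rightarrow> ('g \<times> nat \<times> nat \<Rightarrow> real) set \<Rightarrow> bool" where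
  "is_net S k eps A B \<longleftrightarrow> (\<forall>b\<in>B. \<exists>a\<in>A. dist_inf S k b a < eps)"

definition weak_equiv :: "'x measure \<Rightarrow> ('g \<Rightarrow> 'x \<Rightarrow> 'x) \<Rightarrow> 'y measure \<Rightarrow> ('g \<Rightarrow> 'y \<Rightarrow> 'y) \<Rightarrow> bool" where
  "weak_equiv M a N b \<longleftrightarrow> (\<forall>S k. finite S \<and> k > 0 \<longrightarrow> Cset M a S k = Cset N b S k)"

definition Step :: "nat \<Rightarrow> nat \<Rightarrow> 'x measure \<Rightarrow> 'y measure \<Rightarrow> ('x \<times> 'y \<Rightarrow> nat) set" where
  "Step k n M N = {f. \<exists>g h phi. g \<in> Meas n M \<and> h \<in> Meas n N \<and>
      (\<forall>i<n. \<forall>j<n. phi i j < k) \<and> (\<forall>x y. f (x, y) = phi (g x) (h y))}"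

definition step_net :: "'x measure \<Rightarrow> ('g \<Rightarrow> 'x \<Rightarrow> 'x) \<Rightarrow> 'y measure \<Rightarrow> ('g \<Rightarrow> 'y \<Rightarrow> 'y)
    \<Rightarrow> 'g set \<Rightarrow> nat \<Rightarrow> real \<Rightarrow> nat \<Rightarrow> bool" where
  "step_net M a N b S k eps n \<longleftrightarrow>
     is_net S k eps (Mat (M \<Otimes>\<^sub>M N) (prod_act a b) S k ` Step k n M N)
                    (Cset (M \<Otimes>\<^sub>M N) (prod_act a b) S k)"

definition Nsk :: "'x measure \<Rightarrow> ('g \<Rightarrow> 'x \<Rightarrow> 'x) \<Rightarrow> 'y measure \<Rightarrow> ('g \<Rightarrow> 'y \<Rightarrow> 'y)
    \<Rightarrow> 'g set \<Rightarrow> nat \<Rightarrow> real \<Rightarrow> nat" where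
  "Nsk M a N b S k eps = (LEAST n. n > 0 \<and> step_net M a N b S k eps n)"

end

theory Submission
  imports Defs
begin


lemma tendsto_fun_iff:
  fixes f :: "'b \<Rightarrow> 'a \<Rightarrow> 'c::topological_space"
  shows "(f \<longlongrightarrow> l) F \<longleftrightarrow> (\<forall>i. ((\<lambda>x. f x i) \<longlongrightarrow> l i) F)"
proof -
  have "(f \<longlongrightarrow> l) F \<longleftrightarrow> limitin (product_topology (\<lambda>_. euclidean) UNIV) f l F"
    by (simp add: euclidean_product_topology)
  also have "\<dots> \<longleftrightarrow> (\<forall>i. ((\<lambda>x. f x i) \<longlongrightarrow> l i) F)"
    by (subst limitin_componentwise) auto
  finally show ?thesis .
qed

lemma finD[simp]: "finite S \<Longrightarrow> finite (S \<times> {..<(k::nat)} \<times> {..<k})"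
  by (intro finite_cartesian_product) auto

lemma dist_inf_nonneg: "finite S \<Longrightarrow> 0 \<le> dist_inf S k u v"
  unfolding dist_inf_def by (rule Max_ge) (auto simp: finD)

lemma dist_inf_ge: "finite S \<Longrightarrow> p \<in> S \<times> {..<k} \<times> {..<k} \<Longrightarrow> \<bar>u p - v p\<bar> \<le> dist_inf S k u v"
  unfolding dist_inf_def by (rule Max_ge) (auto simp: finD)

lemma dist_inf_lessI: "finite S \<Longrightarrow> c > 0 \<Longrightarrow> (\<And>p. p \<in> S \<times> {..<k} \<times> {..<k} \<Longrightarrow> \<bar>u p - v p\<bar> < c)
   \<Longrightarrow> dist_inf S k u v < c"
  unfolding dist_inf_def by (subst Max_less_iff) (auto simp: finD)

lemma dist_inf_leI: "finite S \<Longrightarrow> c \<ge> 0 \<Longrightarrow> (\<And>p. p \<in> S \<times> {..<k} \<times> {..<k} \<Longrightarrow> \<bar>u p - v p\<bar> \<le> c)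
   \<Longrightarrow> dist_inf S k u v \<le> c"
  unfolding dist_inf_def by (subst Max_le_iff) (auto simp: finD)

lemma dist_inf_sym: "dist_inf S k u v = dist_inf S k v u"
  unfolding dist_inf_def by (simp add: abs_minus_commute)

lemma dist_inf_tri: assumes "finite S" shows "dist_inf S k u w \<le> dist_inf S k u v + dist_inf S k v w"
proof (rule dist_inf_leI[OF assms])
  show "0 \<le> dist_inf S k u v + dist_inf S k v w" using dist_inf_nonneg[OF assms] by (simp add: add_nonneg_nonneg)
  fix p assume p: "p \<in> S \<times> {..<k} \<times> {..<k}"
  have "\<bar>u p - w p\<bar> \<le> \<bar>u p - v p\<bar> + \<bar>v p - w p\<bar>" by linarith
  also have "\<dots> \<le> dist_inf S k u v + dist_inf S k v w"
    using dist_inf_ge[OF assms p] by (intro add_mono) auto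
  finally show "\<bar>u p - w p\<bar> \<le> dist_inf S k u v + dist_inf S k v w" .
qed

lemma closure_dist_inf:
  fixes b :: "'g \<times> nat \<times> nat \<Rightarrow> real"
  assumes "finite S" "b \<in> closure A" "\<delta> > 0"
  shows "\<exists>a\<in>A. dist_inf S k b a < \<delta>"
proof -
  define Ob where "Ob = (\<Inter>p\<in>S \<times> {..<k} \<times> {..<k}. (\<lambda>u. u p) -` ball (b p) \<delta>)"
  have "open Ob" unfolding Ob_def
    apply (intro open_INT)
     apply (simp add: assms)
    apply (rule ballI, rule open_vimage)
    by auto
  moreover have "b \<in> Ob" using assms by (auto simp: Ob_def)
  ultimately have "Ob \<inter> A \<noteq> {}" using assms(2) open_Int_closure_eq_empty by blast
  then obtain a where a: "a \<in> A" "a \<in> Ob" by auto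
  have "dist_inf S k b a < \<delta>"
  proof (rule dist_inf_lessI[OF assms(1) assms(3)])
    fix p assume p: "p \<in> S \<times> {..<k} \<times> {..<k}"
    then have "a p \<in> ball (b p) \<delta>" using a(2) unfolding Ob_def by blast
    then show "\<bar>b p - a p\<bar> < \<delta>" by (simp add: dist_real_def)
  qed
  with a show ?thesis by blast
qed

lemma dist_inf_closure:
  fixes b :: "'g::countable \<times> nat \<times> nat \<Rightarrow> real"
  assumes "\<And>\<delta>. \<delta> > 0 \<Longrightarrow> \<exists>c\<in>C. dist_inf S k b c < \<delta>"
    and "\<And>p. p \<notin> S \<times> {..<k} \<times> {..<k} \<Longrightarrow> b p = 0"
    and "\<And>c p. c \<in> C \<Longrightarrow> p \<notin> S \<times> {..<k} \<times> {..<k} \<Longrightarrow> c p = 0"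
    and "finite S"
  shows "b \<in> closure C"
proof -
  have "\<forall>m. \<exists>c. c \<in> C \<and> dist_inf S k b c < 1 / Suc m"
  proof
    fix m :: nat
    have "(0::real) < 1 / Suc m" by simp
    from assms(1)[OF this] show "\<exists>c. c \<in> C \<and> dist_inf S k b c < 1 / Suc m" by blast
  qed
  then obtain c where "\<forall>m. c m \<in> C \<and> dist_inf S k b (c m) < 1 / Suc m"
    by (rule choice[THEN exE]) blast
  then have c: "\<And>m. c m \<in> C" "\<And>m. dist_inf S k b (c m) < 1 / Suc m" by auto
  have lim: "(c \<longlongrightarrow> b) sequentially"
  proof (subst tendsto_fun_iff, intro allI)
    fix p
    show "((\<lambda>m. c m p) \<longlongrightarrow> b p) sequentially"
    proof (cases "p \<in> S \<times> {..<k} \<times> {..<k}")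
      case False
      have "(\<lambda>m. c m p) = (\<lambda>m. 0)" using assms(3)[OF c(1) False] by (rule ext)
      then show ?thesis using assms(2)[OF False] by simp
    next
      case True
      have h: "\<bar>c m p - b p\<bar> \<le> 1 / Suc m" for m
        using dist_inf_ge[OF assms(4) True, of b "c m"] c(2)[of m] by linarith
      have "((\<lambda>m. c m p - b p) \<longlongrightarrow> 0) sequentially"
        apply (rule Lim_null_comparison[where g="\<lambda>m. inverse (real (Suc m))"])
         apply (rule always_eventually)
         using h apply (simp add: divide_inverse)
        by (rule LIMSEQ_inverse_real_of_nat)
      then show ?thesis by (simp add: LIM_zero_iff) 
    qed
  qed
  show ?thesis
    by (rule closure_sequential[THEN iffD2], rule exI[of _ c]) (use c(1) lim in auto)
qed


lemma pmpD:
  assumes "pmp_action M a"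
  shows "prob_space M" "sets M = sets borel" "space M = UNIV" "a g \<in> M \<rightarrow>\<^sub>M M" "distr M M (a g) = M"
  using assms unfolding pmp_action_def by (auto dest: sets_eq_imp_space_eq)

lemma prod_act_pres:
  assumes "pmp_action M a" "pmp_action N b"
  shows "prod_act a b g \<in> (M \<Otimes>\<^sub>M N) \<rightarrow>\<^sub>M (M \<Otimes>\<^sub>M N)"
    "distr (M \<Otimes>\<^sub>M N) (M \<Otimes>\<^sub>M N) (prod_act a b g) = M \<Otimes>\<^sub>M N"
proof -
  note A = pmpD[OF assms(1)] and B = pmpD[OF assms(2)]
  have eq: "prod_act a b g = (\<lambda>(x, y). (a g x, b g y))"
    by (auto simp: prod_act_def fun_eq_iff)
  show "prod_act a b g \<in> (M \<Otimes>\<^sub>M N) \<rightarrow>\<^sub>M (M \<Otimes>\<^sub>M N)"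
    unfolding eq using A(4)[of g] B(4)[of g] by measurable
  interpret N: prob_space N by (rule B(1))
  have "distr M M (a g) \<Otimes>\<^sub>M distr N N (b g) = distr (M \<Otimes>\<^sub>M N) (M \<Otimes>\<^sub>M N) (\<lambda>(x, y). (a g x, b g y))"
    by (rule pair_measure_distr) (use A B N.sigma_finite_measure_axioms in auto)
  then show "distr (M \<Otimes>\<^sub>M N) (M \<Otimes>\<^sub>M N) (prod_act a b g) = M \<Otimes>\<^sub>M N"
    using A(5) B(5) eq by simp
qed



lemma Meas_sets:
  assumes "f \<in> Meas k M"
  shows "{x \<in> space M. f x = i} \<in> sets M"
  using assms unfolding Meas_def by measurable

lemma meas_UNIV: "f \<in> M \<rightarrow>\<^sub>M count_space A \<Longrightarrow> f \<in> M \<rightarrow>\<^sub>M count_space UNIV"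
  using measurable_compose[of f M "count_space A" "\<lambda>x. x" "count_space UNIV"] by simp

lemma pair_prob:
  assumes "pmp_action M a" "pmp_action N b"
  shows "prob_space (M \<Otimes>\<^sub>M N)" "space (M \<Otimes>\<^sub>M N) = UNIV"
proof -
  interpret M: prob_space M by (rule pmpD(1)[OF assms(1)])
  interpret N: prob_space N by (rule pmpD(1)[OF assms(2)])
  interpret pair_prob_space M N ..
  show "prob_space (M \<Otimes>\<^sub>M N)" by (rule prob_space_axioms)
  show "space (M \<Otimes>\<^sub>M N) = UNIV"
    using pmpD(3)[OF assms(1)] pmpD(3)[OF assms(2)] by (simp add: space_pair_measure)
qed

lemma Mat_close:
  assumes am: "pmp_action M a" and bn: "pmp_action N b"
    and f: "f \<in> Meas k (M \<Otimes>\<^sub>M N)" and f': "f' \<in> Meas k (M \<Otimes>\<^sub>M N)"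
    and fin: "finite S"
    and e: "measure (M \<Otimes>\<^sub>M N) {p. f p \<noteq> f' p} \<le> e"
  shows "dist_inf S k (Mat (M \<Otimes>\<^sub>M N) (prod_act a b) S k f) (Mat (M \<Otimes>\<^sub>M N) (prod_act a b) S k f') \<le> 2 * e"
proof -
  define P where "P = M \<Otimes>\<^sub>M N"
  interpret P: prob_space P unfolding P_def by (rule pair_prob[OF am bn])
  have sp: "space P = UNIV" unfolding P_def by (rule pair_prob[OF am bn])
  define E where "E = {p. f p \<noteq> f' p}"
  have fm: "f \<in> P \<rightarrow>\<^sub>M count_space UNIV" "f' \<in> P \<rightarrow>\<^sub>M count_space UNIV"
    using f f' unfolding Meas_def P_def
    by (auto intro: meas_UNIV)
  have Es: "E \<in> sets P"
  proof -
    have sp': "space (M \<Otimes>\<^sub>M N) = UNIV" by (rule pair_prob[OF am bn])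
    have fk: "f p < k" for p using measurable_space[OF f[unfolded Meas_def], of p] sp' by auto
    have "E = (\<Union>i<k. {p \<in> space P. f p = i} - {p \<in> space P. f' p = i})"
      using fk unfolding E_def by (auto simp: sp)
    also have "\<dots> \<in> sets P" using Meas_sets[OF f] Meas_sets[OF f'] unfolding P_def by auto
    finally show ?thesis .
  qed
  have e0: "0 \<le> e" using e measure_nonneg[of P E] unfolding P_def E_def by linarith
  show ?thesis
  proof (rule dist_inf_leI[OF fin])
    show "0 \<le> 2 * e" using e0 by simp
    fix q assume q: "q \<in> S \<times> {..<k} \<times> {..<k}"
    then obtain g i j where qq: "q = (g, i, j)" "g \<in> S" "i < k" "j < k" by auto
    define T where "T = prod_act a b g"
    have Tm: "T \<in> P \<rightarrow>\<^sub>M P" unfolding T_def P_def by (rule prod_act_pres[OF am bn])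
    have Td: "distr P P T = P" unfolding T_def P_def by (rule prod_act_pres[OF am bn])
    have TE: "measure P (T -` E \<inter> space P) = measure P E"
      using measure_distr[OF Tm Es] Td by simp
    have TEs: "T -` E \<inter> space P \<in> sets P" using Tm Es by measurable
    define C where "C = (\<lambda>h. {x \<in> space P. h x = i \<and> h (T x) = j})"
    have Cs: "C h \<in> sets P" if "h \<in> P \<rightarrow>\<^sub>M count_space UNIV" for h
      unfolding C_def using that Tm by measurable
    have key: "measure P (C h1) \<le> measure P (C h2) + 2 * e"
      if h: "h1 \<in> P \<rightarrow>\<^sub>M count_space UNIV" "h2 \<in> P \<rightarrow>\<^sub>M count_space UNIV"
        "\<forall>p. h1 p \<noteq> h2 p \<longleftrightarrow> p \<in> E" for h1 h2
    proof -
      have "C h1 \<subseteq> C h2 \<union> E \<union> (T -` E \<inter> space P)"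
      proof
        fix x assume x: "x \<in> C h1"
        show "x \<in> C h2 \<union> E \<union> (T -` E \<inter> space P)"
        proof (cases "x \<in> E \<or> T x \<in> E")
          case True then show ?thesis using x unfolding C_def by blast
        next
          case False
          then have "h1 x = h2 x" "h1 (T x) = h2 (T x)" using h(3) by metis+
          then show ?thesis using x unfolding C_def by auto
        qed
      qed
      then have "measure P (C h1) \<le> measure P (C h2 \<union> E \<union> (T -` E \<inter> space P))"
        by (intro P.finite_measure_mono) (use Cs[OF h(2)] Es TEs in auto)
      also have "\<dots> \<le> measure P (C h2) + measure P E + measure P (T -` E \<inter> space P)"
        using measure_Un_le[of "C h2 \<union> E" P "T -` E \<inter> space P"]
          measure_Un_le[of "C h2" P E] Cs[OF h(2)] Es TEs by auto
      also have "\<dots> \<le> measure P (C h2) + 2 * e" using TE e by (simp add: P_def E_def)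
      finally show ?thesis .
    qed
    have k1: "measure P (C f) \<le> measure P (C f') + 2 * e"
      by (rule key) (use fm in \<open>auto simp: E_def\<close>)
    have k2: "measure P (C f') \<le> measure P (C f) + 2 * e"
      by (rule key) (use fm in \<open>auto simp: E_def\<close>)
    have "Mat P (prod_act a b) S k f q = measure P (C f)" "Mat P (prod_act a b) S k f' q = measure P (C f')"
      using qq by (auto simp: Mat_def C_def T_def)
    then show "\<bar>Mat (M \<Otimes>\<^sub>M N) (prod_act a b) S k f q - Mat (M \<Otimes>\<^sub>M N) (prod_act a b) S k f' q\<bar> \<le> 2 * e"
      using k1 k2 by (simp add: P_def)
  qed
qed



lemma meas2:
  fixes g :: "'a \<Rightarrow> 'b::countable" and g' :: "'a \<Rightarrow> 'd::countable"
  assumes "g \<in> M \<rightarrow>\<^sub>M count_space UNIV" "g' \<in> M \<rightarrow>\<^sub>M count_space UNIV"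
  shows "(\<lambda>x. F (g x) (g' x)) \<in> M \<rightarrow>\<^sub>M (count_space UNIV :: 'c measure)"
proof -
  have "(\<lambda>x. F i (g' x)) \<in> M \<rightarrow>\<^sub>M (count_space UNIV :: 'c measure)" for i
    by (rule measurable_compose_countable'[OF _ assms(2)]) auto
  then show ?thesis
    by (rule measurable_compose_countable'[OF _ assms(1)]) auto
qed

lemma Meas_iff: "space M = UNIV \<Longrightarrow> g \<in> Meas n M \<longleftrightarrow> g \<in> M \<rightarrow>\<^sub>M count_space UNIV \<and> (\<forall>x. g x < n)"
  unfolding Meas_def
  by (auto intro: meas_UNIV measurable_count_space_extend[of _ UNIV] dest: measurable_space)

definition Rep :: "'x measure \<Rightarrow> 'y measure \<Rightarrow> ('x \<times> 'y) set \<Rightarrow> bool" where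
  "Rep M N R \<longleftrightarrow> (\<exists>g h n Q. g \<in> Meas n M \<and> h \<in> Meas n N \<and> R = {p. (g (fst p), h (snd p)) \<in> Q})"

lemma rep_common:
  assumes sM: "space M = UNIV" and sN: "space N = UNIV"
    and "finite I" and "\<forall>i\<in>I. Rep M N (R i)"
  shows "\<exists>g h n. n > 0 \<and> g \<in> Meas n M \<and> h \<in> Meas n N \<and> (\<forall>i\<in>I. \<exists>Q. R i = {p. (g (fst p), h (snd p)) \<in> Q})"
  using assms(3,4)
proof (induction I rule: finite_induct)
  case empty
  have "(\<lambda>x. 0::nat) \<in> Meas 1 M" "(\<lambda>x. 0::nat) \<in> Meas 1 N" by (auto simp: Meas_iff sM sN)
  then show ?case by blast
next
  case (insert i0 I)
  then obtain g h n where gh: "n > 0" "g \<in> Meas n M" "h \<in> Meas n N"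
    "\<forall>i\<in>I. \<exists>Q. R i = {p. (g (fst p), h (snd p)) \<in> Q}" by auto
  from insert obtain g' h' n' Q' where gh': "g' \<in> Meas n' M" "h' \<in> Meas n' N"
    "R i0 = {p. (g' (fst p), h' (snd p)) \<in> Q'}" unfolding Rep_def by auto
  have gm: "g \<in> M \<rightarrow>\<^sub>M count_space UNIV" "\<And>x. g x < n" using gh(2) by (auto simp: Meas_iff sM)
  have hm: "h \<in> N \<rightarrow>\<^sub>M count_space UNIV" "\<And>x. h x < n" using gh(3) by (auto simp: Meas_iff sN)
  have gm': "g' \<in> M \<rightarrow>\<^sub>M count_space UNIV" "\<And>x. g' x < n'" using gh'(1) by (auto simp: Meas_iff sM)
  have hm': "h' \<in> N \<rightarrow>\<^sub>M count_space UNIV" "\<And>x. h' x < n'" using gh'(2) by (auto simp: Meas_iff sN)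
  have n'0: "n' > 0" using gm'(2)[of undefined] by simp
  define G where "G x = g x * n' + g' x" for x
  define H where "H y = h y * n' + h' y" for y
  have lt: "a * n' + b < n * n'" if "a < n" "b < n'" for a b :: nat
  proof -
    have "a * n' + b < a * n' + n'" using that by simp
    also have "\<dots> = (a + 1) * n'" by simp
    also have "\<dots> \<le> n * n'" using that by (intro mult_right_mono) auto
    finally show ?thesis .
  qed
  have G: "G \<in> Meas (n * n') M"
    unfolding Meas_iff[OF sM] G_def using lt gm gm' by (auto intro: meas2)
  have H: "H \<in> Meas (n * n') N"
    unfolding Meas_iff[OF sN] H_def using lt hm hm' by (auto intro: meas2)
  have dv: "(a * n' + b) div n' = a" "(a * n' + b) mod n' = b" if "b < n'" for a b :: nat
    using that n'0 by auto
  have "\<forall>i\<in>insert i0 I. \<exists>Q. R i = {p. (G (fst p), H (snd p)) \<in> Q}"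
  proof
    fix i assume i: "i \<in> insert i0 I"
    show "\<exists>Q. R i = {p. (G (fst p), H (snd p)) \<in> Q}"
    proof (cases "i = i0")
      case True
      show ?thesis
        by (rule exI[of _ "{(a, b). (a mod n', b mod n') \<in> Q'}"])
          (use gh'(3) True in \<open>auto simp: G_def H_def dv[OF gm'(2)] dv[OF hm'(2)] gm'(2) hm'(2)\<close>)
    next
      case False
      with i gh(4) obtain Q where Q: "R i = {p. (g (fst p), h (snd p)) \<in> Q}" by auto
      show ?thesis
        by (rule exI[of _ "{(a, b). (a div n', b div n') \<in> Q}"])
          (use Q in \<open>auto simp: G_def H_def dv[OF gm'(2)] dv[OF hm'(2)]\<close>)
    qed
  qed
  moreover have "n * n' > 0" using gh(1) n'0 by simp
  ultimately show ?case using G H by blast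
qed

lemma rep_rect:
  assumes sM: "space M = UNIV" and sN: "space N = UNIV" and "X \<in> sets M" "Y \<in> sets N"
  shows "Rep M N (X \<times> Y)"
proof -
  define g where "g x = (if x \<in> X then 1 else 0::nat)" for x
  define h where "h y = (if y \<in> Y then 1 else 0::nat)" for y
  have "g \<in> Meas 2 M" unfolding Meas_iff[OF sM] g_def using assms(3) by (auto simp: sM)
  moreover have "h \<in> Meas 2 N" unfolding Meas_iff[OF sN] h_def using assms(4) by (auto simp: sN)
  moreover have "X \<times> Y = {p. (g (fst p), h (snd p)) \<in> {(1,1)}}" by (auto simp: g_def h_def)
  ultimately show ?thesis unfolding Rep_def by blast
qed

lemma rep_sets:
  assumes sM: "space M = UNIV" and sN: "space N = UNIV" and "Rep M N R"
  shows "R \<in> sets (M \<Otimes>\<^sub>M N)"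
proof -
  obtain g h n Q where gh: "g \<in> Meas n M" "h \<in> Meas n N" "R = {p. (g (fst p), h (snd p)) \<in> Q}"
    using assms(3) unfolding Rep_def by auto
  have gm: "g \<in> M \<rightarrow>\<^sub>M count_space UNIV" using gh(1) by (auto simp: Meas_iff sM)
  have hm: "h \<in> N \<rightarrow>\<^sub>M count_space UNIV" using gh(2) by (auto simp: Meas_iff sN)
  have "(\<lambda>p. g (fst p)) \<in> M \<Otimes>\<^sub>M N \<rightarrow>\<^sub>M count_space UNIV" using gm by measurable
  moreover have "(\<lambda>p. h (snd p)) \<in> M \<Otimes>\<^sub>M N \<rightarrow>\<^sub>M count_space UNIV" using hm by measurable
  ultimately have "(\<lambda>p. (g (fst p), h (snd p))) \<in> M \<Otimes>\<^sub>M N \<rightarrow>\<^sub>M (count_space UNIV :: (nat \<times> nat) measure)"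
    by (rule meas2)
  then have "(\<lambda>p. (g (fst p), h (snd p))) -` Q \<inter> space (M \<Otimes>\<^sub>M N) \<in> sets (M \<Otimes>\<^sub>M N)"
    by (rule measurable_sets) simp
  then show ?thesis using gh(3) by (simp add: space_pair_measure sM sN vimage_def)
qed



lemma set_approx:
  fixes M :: "'x::polish_space measure" and N :: "'y::polish_space measure"
  assumes am: "pmp_action M a" and bn: "pmp_action N b"
    and A: "A \<in> sets (M \<Otimes>\<^sub>M N)" and d: "\<delta> > 0"
  shows "\<exists>R. Rep M N R \<and> measure (M \<Otimes>\<^sub>M N) ((A - R) \<union> (R - A)) < \<delta>"
proof -
  define P where "P = M \<Otimes>\<^sub>M N"
  interpret P: prob_space P unfolding P_def by (rule pair_prob[OF am bn])
  have sM: "space M = UNIV" "sets M = sets borel" using pmpD[OF am] by auto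
  have sN: "space N = UNIV" "sets N = sets borel" using pmpD[OF bn] by auto
  have sb: "sets P = sets borel"
  proof -
    have "sets P = sets (borel \<Otimes>\<^sub>M borel :: ('x \<times> 'y) measure)"
      unfolding P_def by (rule sets_pair_measure_cong[OF sM(2) sN(2)])
    also have "\<dots> = sets borel" by (subst borel_prod) (rule refl)
    finally show ?thesis .
  qed
  have fin: "emeasure P (space P) \<noteq> \<infinity>" by simp
  have Ab: "A \<in> sets borel" using A sb unfolding P_def by simp
  have "\<exists>K. K \<subseteq> A \<and> compact K \<and> measure P A - \<delta>/2 < measure P K"
  proof (cases "measure P A < \<delta>/2")
    case True then show ?thesis by (intro exI[of _ "{}"]) auto
  next
    case False
    have "ennreal (measure P A - \<delta>/2) < emeasure P A"
      using False d by (simp add: P.emeasure_eq_measure ennreal_less_iff)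
    also have "\<dots> = (SUP K \<in> {K. K \<subseteq> A \<and> compact K}. emeasure P K)"
      by (rule inner_regular[OF sb fin Ab])
    finally obtain K where K: "K \<subseteq> A" "compact K" "ennreal (measure P A - \<delta>/2) < emeasure P K"
      by (auto simp: less_SUP_iff)
    then have "measure P A - \<delta>/2 < measure P K"
      using False by (simp add: P.emeasure_eq_measure ennreal_less_iff)
    with K show ?thesis by blast
  qed
  then obtain K where K: "K \<subseteq> A" "compact K" "measure P A - \<delta>/2 < measure P K" by blast
  have "(INF U \<in> {U. A \<subseteq> U \<and> open U}. emeasure P U) = emeasure P A"
    by (rule outer_regular[OF sb fin Ab, symmetric])
  also have "\<dots> < ennreal (measure P A + \<delta>/2)"
    using d by (simp add: P.emeasure_eq_measure ennreal_less_iff)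
  finally obtain U where U: "A \<subseteq> U" "open U" "emeasure P U < ennreal (measure P A + \<delta>/2)"
    by (auto simp: INF_less_iff)
  have mU: "measure P U < measure P A + \<delta>/2"
  proof -
    have "ennreal (measure P U) < ennreal (measure P A + \<delta>/2)" using U(3) by (simp add: P.emeasure_eq_measure)
    then show ?thesis using d by (subst (asm) ennreal_less_iff) auto
  qed
  define T where "T = {B. \<exists>X Y. open X \<and> open Y \<and> B = X \<times> Y \<and> X \<times> Y \<subseteq> U}"
  have "K \<subseteq> \<Union>T"
  proof
    fix p assume "p \<in> K"
    then have "p \<in> U" using K U by auto
    then obtain X Y where "open X" "open Y" "p \<in> X \<times> Y" "X \<times> Y \<subseteq> U"
      using open_prod_elim[OF U(2)] by metis
    then show "p \<in> \<Union>T" unfolding T_def by blast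
  qed
  moreover have "\<And>B. B \<in> T \<Longrightarrow> open B" unfolding T_def by (auto intro: open_Times)
  ultimately obtain T' where T': "T' \<subseteq> T" "finite T'" "K \<subseteq> \<Union>T'"
    using compactE[OF K(2)] by metis
  have "\<forall>i\<in>T'. Rep M N i"
  proof
    fix i assume "i \<in> T'"
    then obtain X Y where "open X" "open Y" "i = X \<times> Y" using T' unfolding T_def by auto
    then show "Rep M N i" using rep_rect[OF sM(1) sN(1), of X Y] sM(2) sN(2) by auto
  qed
  from rep_common[OF sM(1) sN(1) T'(2), of "\<lambda>i. i"] this obtain g h n where
    gh: "g \<in> Meas n M" "h \<in> Meas n N" "\<forall>i\<in>T'. \<exists>Q. i = {p. (g (fst p), h (snd p)) \<in> Q}" by auto
  then obtain Qf where Qf: "\<forall>i\<in>T'. i = {p. (g (fst p), h (snd p)) \<in> Qf i}" by metis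
  define R where "R = \<Union>T'"
  have RQ: "R = {p. (g (fst p), h (snd p)) \<in> (\<Union>i\<in>T'. Qf i)}"
    unfolding R_def using Qf by blast
  have repR: "Rep M N R" unfolding Rep_def using gh(1,2) RQ by blast
  have Rs: "R \<in> sets P" unfolding P_def by (rule rep_sets[OF sM(1) sN(1) repR])
  have KR: "K \<subseteq> R" using T' R_def by auto
  have RU: "R \<subseteq> U" using T' unfolding R_def T_def by auto
  have Ks: "K \<in> sets P" using K(2) sb by (simp add: compact_imp_closed borel_closed)
  have Us: "U \<in> sets P" using U(2) sb by (simp add: borel_open)
  have "measure P ((A - R) \<union> (R - A)) \<le> measure P (U - K)"
    by (rule P.finite_measure_mono) (use K U KR RU Ks Us in auto)
  also have "\<dots> = measure P U - measure P K"
    by (rule P.finite_measure_Diff[OF Us Ks]) (use K U in auto)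
  also have "\<dots> < \<delta>" using K(3) mU by simp
  finally show ?thesis using repR unfolding P_def by blast
qed



lemma step_meas:
  assumes am: "pmp_action M a" and bn: "pmp_action N b" and f: "f \<in> Step k n M N"
  shows "f \<in> Meas k (M \<Otimes>\<^sub>M N)"
proof -
  have sM: "space M = UNIV" using pmpD[OF am] by auto
  have sN: "space N = UNIV" using pmpD[OF bn] by auto
  have sP: "space (M \<Otimes>\<^sub>M N) = UNIV" by (rule pair_prob[OF am bn])
  obtain g h phi where gh: "g \<in> Meas n M" "h \<in> Meas n N" "\<forall>i<n. \<forall>j<n. phi i j < k"
    "\<forall>x y. f (x, y) = phi (g x) (h y)" using f unfolding Step_def by auto
  have gm: "g \<in> M \<rightarrow>\<^sub>M count_space UNIV" "\<And>x. g x < n" using gh(1) by (auto simp: Meas_iff sM)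
  have hm: "h \<in> N \<rightarrow>\<^sub>M count_space UNIV" "\<And>x. h x < n" using gh(2) by (auto simp: Meas_iff sN)
  have feq: "f = (\<lambda>p. phi (g (fst p)) (h (snd p)))" using gh(4) by auto
  have "(\<lambda>p. g (fst p)) \<in> M \<Otimes>\<^sub>M N \<rightarrow>\<^sub>M count_space UNIV" using gm by measurable
  moreover have "(\<lambda>p. h (snd p)) \<in> M \<Otimes>\<^sub>M N \<rightarrow>\<^sub>M count_space UNIV" using hm by measurable
  ultimately have "(\<lambda>p. phi (g (fst p)) (h (snd p))) \<in> M \<Otimes>\<^sub>M N \<rightarrow>\<^sub>M count_space UNIV"
    by (rule meas2)
  then show ?thesis unfolding Meas_iff[OF sP] feq using gm(2) hm(2) gh(3) by auto
qed

lemma fun_approx: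
  fixes M :: "'x::polish_space measure" and N :: "'y::polish_space measure"
  assumes am: "pmp_action M a" and bn: "pmp_action N b"
    and f: "f \<in> Meas k (M \<Otimes>\<^sub>M N)" and k: "k > 0" and d: "\<delta> > 0"
  shows "\<exists>n>0. \<exists>f'\<in>Step k n M N. measure (M \<Otimes>\<^sub>M N) {p. f p \<noteq> f' p} < \<delta>"
proof -
  define P where "P = M \<Otimes>\<^sub>M N"
  interpret P: prob_space P unfolding P_def by (rule pair_prob[OF am bn])
  have sM: "space M = UNIV" using pmpD[OF am] by auto
  have sN: "space N = UNIV" using pmpD[OF bn] by auto
  have sP: "space P = UNIV" unfolding P_def by (rule pair_prob[OF am bn])
  have fk: "f p < k" for p using f unfolding Meas_iff[OF sP[unfolded P_def]] by (cases p) auto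
  define A where "A i = {p. f p = i}" for i
  have As: "A i \<in> sets P" for i
    using Meas_sets[OF f, of i] sP unfolding A_def P_def by simp
  have "\<forall>i. \<exists>R. Rep M N R \<and> measure P ((A i - R) \<union> (R - A i)) < \<delta> / k"
    using set_approx[OF am bn _ , of _ "\<delta> / k"] As d k unfolding P_def by auto
  then obtain R where "\<forall>i. Rep M N (R i) \<and> measure P ((A i - R i) \<union> (R i - A i)) < \<delta> / k"
    by (rule choice[THEN exE]) blast
  then have R: "\<And>i. Rep M N (R i)" "\<And>i. measure P ((A i - R i) \<union> (R i - A i)) < \<delta> / k"
    by auto
  obtain g h n where gh: "n > 0" "g \<in> Meas n M" "h \<in> Meas n N"
    "\<forall>i\<in>{..<k}. \<exists>Q. R i = {p. (g (fst p), h (snd p)) \<in> Q}"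
    using rep_common[OF sM sN, of "{..<k}" R] R(1) by auto
  then obtain Q where "\<forall>i\<in>{..<k}. R i = {p. (g (fst p), h (snd p)) \<in> Q i}"
    using bchoice[OF gh(4)] by blast
  then have Q: "\<And>i. i < k \<Longrightarrow> R i = {p. (g (fst p), h (snd p)) \<in> Q i}" by auto
  define phi where "phi a b = (if \<exists>i<k. (a, b) \<in> Q i then LEAST i. i < k \<and> (a, b) \<in> Q i else 0)" for a b
  have phik: "phi a b < k" for a b
  proof (cases "\<exists>i<k. (a, b) \<in> Q i")
    case True
    then obtain i where "i < k" "(a, b) \<in> Q i" by auto
    then have "(LEAST i. i < k \<and> (a, b) \<in> Q i) < k"
      using LeastI[of "\<lambda>i. i < k \<and> (a, b) \<in> Q i" i] by blast
    then show ?thesis using True by (simp add: phi_def)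
  qed (use k in \<open>auto simp add: phi_def\<close>)
  define f' where "f' p = phi (g (fst p)) (h (snd p))" for p
  have f'S: "f' \<in> Step k n M N" unfolding Step_def f'_def
    by (intro CollectI exI[of _ g] exI[of _ h] exI[of _ phi] conjI allI impI gh(2,3) phik) simp
  have sub: "{p. f p \<noteq> f' p} \<subseteq> (\<Union>i<k. (A i - R i) \<union> (R i - A i))"
  proof
    fix p assume p: "p \<in> {p. f p \<noteq> f' p}"
    show "p \<in> (\<Union>i<k. (A i - R i) \<union> (R i - A i))"
    proof (rule ccontr)
      assume nb: "p \<notin> (\<Union>i<k. (A i - R i) \<union> (R i - A i))"
      then have eqv: "p \<in> R i \<longleftrightarrow> f p = i" if "i < k" for i using that unfolding A_def by blast
      define i where "i = f p"
      have ik: "i < k" using fk by (simp add: i_def)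
      have inQ: "(g (fst p), h (snd p)) \<in> Q i" using eqv[OF ik] Q[OF ik] by (simp add: i_def)
      define j where "j = (LEAST j. j < k \<and> (g (fst p), h (snd p)) \<in> Q j)"
      have j: "j < k" "(g (fst p), h (snd p)) \<in> Q j"
        using LeastI[of "\<lambda>j. j < k \<and> (g (fst p), h (snd p)) \<in> Q j" i] ik inQ unfolding j_def by auto
      have "f' p = j" using ik inQ unfolding f'_def phi_def j_def by auto
      moreover have "f p = j" using eqv[OF j(1)] Q[OF j(1)] j(2) by simp
      ultimately show False using p by simp
    qed
  qed
  have Rs: "R i \<in> sets P" for i unfolding P_def by (rule rep_sets[OF sM sN R(1)])
  have "measure P {p. f p \<noteq> f' p} \<le> measure P (\<Union>i<k. (A i - R i) \<union> (R i - A i))"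
    by (rule P.finite_measure_mono[OF sub]) (use As Rs in auto)
  also have "\<dots> \<le> (\<Sum>i<k. measure P ((A i - R i) \<union> (R i - A i)))"
    by (rule measure_subadditive_finite) (use As Rs in \<open>auto simp: P.emeasure_eq_measure\<close>)
  also have "\<dots> < (\<Sum>i<k. \<delta> / k)"
    by (rule sum_strict_mono) (use k R(2) in auto)
  also have "\<dots> = \<delta>" using k by simp
  finally show ?thesis using f'S gh(1) unfolding P_def by blast
qed



lemma measure_pair_times:
  assumes "prob_space M" "prob_space N" "X \<in> sets M" "Y \<in> sets N"
  shows "measure (M \<Otimes>\<^sub>M N) (X \<times> Y) = measure M X * measure N Y"
proof -
  interpret N: prob_space N by fact
  have "measure (M \<Otimes>\<^sub>M N) (X \<times> Y) = enn2real (emeasure M X * emeasure N Y)"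
    unfolding measure_def using assms by (simp add: N.emeasure_pair_measure_Times)
  also have "\<dots> = measure M X * measure N Y" by (simp add: enn2real_mult measure_def)
  finally show ?thesis .
qed

definition Phi :: "'g set \<Rightarrow> nat \<Rightarrow> nat \<Rightarrow> (nat \<Rightarrow> nat \<Rightarrow> nat) \<Rightarrow> ('g \<times> nat \<times> nat \<Rightarrow> real)
   \<Rightarrow> ('g \<times> nat \<times> nat \<Rightarrow> real) \<Rightarrow> ('g \<times> nat \<times> nat \<Rightarrow> real)" where
  "Phi S k n phi u v = (\<lambda>(g, i, j). if g \<in> S \<and> i < k \<and> j < k then
     (\<Sum>ac\<in>{..<n} \<times> {..<n}. \<Sum>bd\<in>{..<n} \<times> {..<n}.
        if phi (fst ac) (fst bd) = i \<and> phi (snd ac) (snd bd) = j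
        then u (g, fst ac, snd ac) * v (g, fst bd, snd bd) else 0) else 0)"

lemma cont_eval: "continuous_on S f \<Longrightarrow> continuous_on S (\<lambda>x. f x i)"
  by (rule continuous_on_product_then_coordinatewise)

lemma cont_fst_ev: "continuous_on UNIV (\<lambda>z. fst z p :: real)"
  by (rule cont_eval[OF continuous_on_fst[OF continuous_on_id]])

lemma cont_snd_ev: "continuous_on UNIV (\<lambda>z. snd z p :: real)"
  by (rule cont_eval[OF continuous_on_snd[OF continuous_on_id]])

lemma cont_if_const: "continuous_on S f \<Longrightarrow> continuous_on S (\<lambda>z. if P then f z else (0::real))"
  by (cases P) auto

lemma Phi_cont:
  fixes S :: "'g set"
  shows "continuous_on UNIV (\<lambda>z. Phi S k n phi (fst z) (snd z))"
proof (rule continuous_on_coordinatewise_then_product)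
  fix q :: "'g \<times> nat \<times> nat"
  obtain g i j where q: "q = (g, i, j)" by (cases q) auto
  show "continuous_on UNIV (\<lambda>z. Phi S k n phi (fst z) (snd z) q)"
    unfolding q Phi_def prod.case
    apply (rule cont_if_const)
    apply (rule continuous_on_sum, rule continuous_on_sum)
    apply (rule cont_if_const)
    apply (rule continuous_on_mult)
    by (rule cont_fst_ev cont_snd_ev)+
qed

lemma Mat_step:
  fixes M :: "'x::polish_space measure" and N :: "'y::polish_space measure"
  assumes am: "pmp_action M a" and bn: "pmp_action N b"
    and g: "g \<in> Meas n M" and h: "h \<in> Meas n N"
  shows "Mat (M \<Otimes>\<^sub>M N) (prod_act a b) S k (\<lambda>p. phi (g (fst p)) (h (snd p)))
     = Phi S k n phi (Mat M a S n g) (Mat N b S n h)"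
proof (rule ext, clarify)
  fix \<gamma> i j
  define P where "P = M \<Otimes>\<^sub>M N"
  interpret P: prob_space P unfolding P_def by (rule pair_prob[OF am bn])
  interpret M: prob_space M by (rule pmpD[OF am])
  interpret N: prob_space N by (rule pmpD[OF bn])
  have sM: "space M = UNIV" using pmpD[OF am] by auto
  have sN: "space N = UNIV" using pmpD[OF bn] by auto
  have sP: "space P = UNIV" unfolding P_def by (rule pair_prob[OF am bn])
  have gm: "g \<in> M \<rightarrow>\<^sub>M count_space UNIV" "\<And>x. g x < n" using g by (auto simp: Meas_iff sM)
  have hm: "h \<in> N \<rightarrow>\<^sub>M count_space UNIV" "\<And>x. h x < n" using h by (auto simp: Meas_iff sN)
  have am': "a \<gamma> \<in> M \<rightarrow>\<^sub>M M" using pmpD[OF am] by auto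
  have bn': "b \<gamma> \<in> N \<rightarrow>\<^sub>M N" using pmpD[OF bn] by auto
  define G where "G ac = {x \<in> space M. g x = fst ac \<and> g (a \<gamma> x) = snd ac}" for ac
  define H where "H bd = {y \<in> space N. h y = fst bd \<and> h (b \<gamma> y) = snd bd}" for bd
  have Gs: "G ac \<in> sets M" for ac unfolding G_def using gm am' by measurable
  have Hs: "H bd \<in> sets N" for bd unfolding H_def using hm bn' by measurable
  define I where "I = ({..<n} \<times> {..<n}) \<times> ({..<n} \<times> {..<n})"
  define c where "c q = (phi (fst (fst q)) (fst (snd q)) = i \<and> phi (snd (fst q)) (snd (snd q)) = j)" for q
  define F where "F q = (if c q then G (fst q) \<times> H (snd q) else {})" for q
  show "Mat P (prod_act a b) S k (\<lambda>p. phi (g (fst p)) (h (snd p))) (\<gamma>, i, j) =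
        Phi S k n phi (Mat M a S n g) (Mat N b S n h) (\<gamma>, i, j)"
  proof (cases "\<gamma> \<in> S \<and> i < k \<and> j < k")
    case False then show ?thesis by (auto simp: Mat_def Phi_def)
  next
    case True
    have seteq: "{x \<in> space P. phi (g (fst x)) (h (snd x)) = i \<and>
        phi (g (fst (prod_act a b \<gamma> x))) (h (snd (prod_act a b \<gamma> x))) = j} = (\<Union>q\<in>I. F q)"
    proof (rule set_eqI)
      fix p :: "'x \<times> 'y"
      obtain x y where p: "p = (x, y)" by (cases p)
      show "p \<in> {x \<in> space P. phi (g (fst x)) (h (snd x)) = i \<and>
        phi (g (fst (prod_act a b \<gamma> x))) (h (snd (prod_act a b \<gamma> x))) = j} \<longleftrightarrow> p \<in> (\<Union>q\<in>I. F q)"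
      proof
        assume L: "p \<in> {x \<in> space P. phi (g (fst x)) (h (snd x)) = i \<and>
          phi (g (fst (prod_act a b \<gamma> x))) (h (snd (prod_act a b \<gamma> x))) = j}"
        define q0 where "q0 = ((g x, g (a \<gamma> x)), (h y, h (b \<gamma> y)))"
        have "q0 \<in> I" unfolding q0_def I_def using gm(2) hm(2) by auto
        moreover have "c q0" using L unfolding c_def q0_def p by (simp add: prod_act_def)
        moreover have "x \<in> G (fst q0)" "y \<in> H (snd q0)" unfolding q0_def G_def H_def sM sN by auto
        ultimately show "p \<in> (\<Union>q\<in>I. F q)" unfolding p F_def by auto
      next
        assume "p \<in> (\<Union>q\<in>I. F q)"
        then obtain q where q: "q \<in> I" "p \<in> F q" by auto
        then have cq: "c q" and xy: "x \<in> G (fst q)" "y \<in> H (snd q)"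
          unfolding F_def p by (auto split: if_splits)
        then show "p \<in> {x \<in> space P. phi (g (fst x)) (h (snd x)) = i \<and>
          phi (g (fst (prod_act a b \<gamma> x))) (h (snd (prod_act a b \<gamma> x))) = j}"
          unfolding p c_def G_def H_def by (auto simp: sP prod_act_def)
      qed
    qed
    have Fs: "F q \<in> sets P" for q unfolding F_def P_def using Gs Hs by auto
    have disj: "disjoint_family_on F I"
      unfolding disjoint_family_on_def F_def G_def H_def by (auto simp: prod_eq_iff)
    have "measure P (\<Union>q\<in>I. F q) = (\<Sum>q\<in>I. measure P (F q))"
      by (rule P.finite_measure_finite_Union) (use Fs disj in \<open>auto simp: I_def\<close>)
    also have "\<dots> = (\<Sum>q\<in>I. if c q then measure M (G (fst q)) * measure N (H (snd q)) else 0)"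
      by (rule sum.cong) (auto simp: F_def P_def measure_pair_times[OF M.prob_space_axioms N.prob_space_axioms Gs Hs])
    also have "\<dots> = (\<Sum>ac\<in>{..<n} \<times> {..<n}. \<Sum>bd\<in>{..<n} \<times> {..<n}.
        if c (ac, bd) then measure M (G ac) * measure N (H bd) else 0)"
      unfolding I_def by (subst sum.cartesian_product) (simp add: case_prod_beta)
    also have "\<dots> = Phi S k n phi (Mat M a S n g) (Mat N b S n h) (\<gamma>, i, j)"
      using True by (auto simp: Phi_def c_def Mat_def G_def H_def intro!: sum.cong)
    finally show ?thesis using True seteq by (simp add: Mat_def P_def)
  qed
qed



abbreviation MatP where "MatP M a N b S k \<equiv> Mat (M \<Otimes>\<^sub>M N) (prod_act a b) S k"

lemma dense_step:
  fixes M :: "'x::polish_space measure" and N :: "'y::polish_space measure"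
  assumes am: "pmp_action M a" and bn: "pmp_action N b"
    and f: "f \<in> Meas k (M \<Otimes>\<^sub>M N)" and k: "k > 0" and S: "finite S" and d: "\<delta> > 0"
  shows "\<exists>n>0. \<exists>f'\<in>Step k n M N. dist_inf S k (MatP M a N b S k f) (MatP M a N b S k f') < \<delta>"
proof -
  obtain n f' where nf: "n > 0" "f' \<in> Step k n M N" "measure (M \<Otimes>\<^sub>M N) {p. f p \<noteq> f' p} < \<delta>/3"
    using fun_approx[OF am bn f k, of "\<delta>/3"] d by auto
  have "dist_inf S k (MatP M a N b S k f) (MatP M a N b S k f') \<le> 2 * (\<delta>/3)"
    by (rule Mat_close[OF am bn f step_meas[OF am bn nf(2)] S]) (use nf(3) in simp)
  also have "\<dots> < \<delta>" using d by simp
  finally show ?thesis using nf by blast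
qed

lemma step_mono:
  assumes am: "pmp_action M a" and bn: "pmp_action N b"
    and f: "f \<in> Step k n M N" and le: "n \<le> n'" and k: "k > 0"
  shows "f \<in> Step k n' M N"
proof -
  have sM: "space M = UNIV" using pmpD[OF am] by auto
  have sN: "space N = UNIV" using pmpD[OF bn] by auto
  obtain g h phi where gh: "g \<in> Meas n M" "h \<in> Meas n N" "\<forall>i<n. \<forall>j<n. phi i j < k"
    "\<forall>x y. f (x, y) = phi (g x) (h y)" using f unfolding Step_def by auto
  have g': "g \<in> Meas n' M" "\<And>x. g x < n" using gh(1) le by (auto simp: Meas_iff sM intro: less_le_trans)
  have h': "h \<in> Meas n' N" "\<And>x. h x < n" using gh(2) le by (auto simp: Meas_iff sN intro: less_le_trans)
  define phi' where "phi' i j = (if i < n \<and> j < n then phi i j else 0)" for i j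
  show ?thesis unfolding Step_def
    by (intro CollectI exI[of _ g] exI[of _ h] exI[of _ phi'] conjI allI impI g'(1) h'(1))
      (use gh(3,4) k g'(2) h'(2) in \<open>auto simp: phi'_def\<close>)
qed

lemma weak_equiv_sym: "weak_equiv M a M' a' \<Longrightarrow> weak_equiv M' a' M a"
  unfolding weak_equiv_def by auto

lemma step_closure:
  fixes M :: "'x::polish_space measure" and N :: "'y::polish_space measure"
    and M' :: "'x2::polish_space measure" and N' :: "'y2::polish_space measure"
  assumes am: "pmp_action M a" and bn: "pmp_action N b"
    and am2: "pmp_action M' a'" and bn2: "pmp_action N' b'"
    and wM: "weak_equiv M a M' a'" and wN: "weak_equiv N b N' b'"
    and S: "finite S" and n: "n > 0"
  shows "MatP M a N b S k ` Step k n M N \<subseteq> closure (MatP M' a' N' b' S k ` Step k n M' N')"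
proof
  fix c assume "c \<in> MatP M a N b S k ` Step k n M N"
  then obtain f where f: "f \<in> Step k n M N" "c = MatP M a N b S k f" by auto
  obtain g h phi where gh: "g \<in> Meas n M" "h \<in> Meas n N" "\<forall>i<n. \<forall>j<n. phi i j < k"
    "\<forall>x y. f (x, y) = phi (g x) (h y)" using f(1) unfolding Step_def by auto
  have feq: "f = (\<lambda>p. phi (g (fst p)) (h (snd p)))" using gh(4) by auto
  have c: "c = Phi S k n phi (Mat M a S n g) (Mat N b S n h)"
    unfolding f(2) feq by (rule Mat_step[OF am bn gh(1,2)])
  define U' where "U' = Mat M' a' S n ` Meas n M'"
  define V' where "V' = Mat N' b' S n ` Meas n N'"
  define A' where "A' = MatP M' a' N' b' S k ` Step k n M' N'"
  define \<Phi> where "\<Phi> z = Phi S k n phi (fst z) (snd z)" for z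
  have u: "Mat M a S n g \<in> closure U'"
  proof -
    have "Mat M a S n g \<in> Cset M a S n" unfolding Cset_def
      by (rule closure_subset[THEN subsetD], rule imageI, rule gh(1))
    also have "\<dots> = Cset M' a' S n" using wM[unfolded weak_equiv_def, rule_format, of S n] S n by simp
    finally show ?thesis unfolding Cset_def U'_def .
  qed
  have v: "Mat N b S n h \<in> closure V'"
  proof -
    have "Mat N b S n h \<in> Cset N b S n" unfolding Cset_def
      by (rule closure_subset[THEN subsetD], rule imageI, rule gh(2))
    also have "\<dots> = Cset N' b' S n" using wN[unfolded weak_equiv_def, rule_format, of S n] S n by simp
    finally show ?thesis unfolding Cset_def V'_def .
  qed
  have "\<Phi> ` closure (U' \<times> V') \<subseteq> closure A'"
  proof (rule image_closure_subset)
    show "continuous_on (closure (U' \<times> V')) \<Phi>"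
      unfolding \<Phi>_def by (rule continuous_on_subset[OF Phi_cont]) simp
    show "closed (closure A')" by simp
    show "\<Phi> ` (U' \<times> V') \<subseteq> closure A'"
    proof
      fix w assume "w \<in> \<Phi> ` (U' \<times> V')"
      then obtain z where z: "z \<in> U' \<times> V'" "w = \<Phi> z" by blast
      then obtain g' h' where gh': "g' \<in> Meas n M'" "h' \<in> Meas n N'"
        "z = (Mat M' a' S n g', Mat N' b' S n h')"
        unfolding U'_def V'_def by blast
      have w: "w = Phi S k n phi (Mat M' a' S n g') (Mat N' b' S n h')"
        using z(2) gh'(3) by (simp add: \<Phi>_def)
      have "w = MatP M' a' N' b' S k (\<lambda>p. phi (g' (fst p)) (h' (snd p)))"
        unfolding w by (rule Mat_step[OF am2 bn2 gh'(1,2), symmetric])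
      moreover have "(\<lambda>p. phi (g' (fst p)) (h' (snd p))) \<in> Step k n M' N'"
        unfolding Step_def
        by (intro CollectI exI[of _ g'] exI[of _ h'] exI[of _ phi] conjI allI impI gh'(1,2))
          (use gh(3) in auto)
      ultimately have "w \<in> A'" unfolding A'_def by blast
      then show "w \<in> closure A'" using closure_subset by blast
    qed
  qed
  moreover have "(Mat M a S n g, Mat N b S n h) \<in> closure (U' \<times> V')"
    using u v by (simp add: closure_Times)
  ultimately have "\<Phi> (Mat M a S n g, Mat N b S n h) \<in> closure A'" by (meson image_subset_iff)
  then show "c \<in> closure (MatP M' a' N' b' S k ` Step k n M' N')"
    unfolding c A'_def \<Phi>_def by simp
qed



lemma Mat_zero: "p \<notin> S \<times> {..<k} \<times> {..<k} \<Longrightarrow> Mat M a S k f p = 0"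
  by (cases p) (auto simp: Mat_def)

lemma Cset_zero:
  assumes "c \<in> Cset M a S k" "p \<notin> S \<times> {..<k} \<times> {..<k}"
  shows "c p = 0"
proof -
  define Z where "Z = (\<Inter>q\<in>- (S \<times> {..<k} \<times> {..<k}). {u :: _ \<Rightarrow> real. u q = 0})"
  have "closed Z" unfolding Z_def
    by (intro closed_INT ballI closed_Collect_eq continuous_on_product_coordinates continuous_on_const)
  moreover have "Mat M a S k ` Meas k M \<subseteq> Z"
  proof
    fix u assume "u \<in> Mat M a S k ` Meas k M"
    then obtain f where "u = Mat M a S k f" by blast
    then show "u \<in> Z" unfolding Z_def by (auto intro!: Mat_zero)
  qed
  ultimately have "Cset M a S k \<subseteq> Z" unfolding Cset_def by (rule closure_minimal[rotated])
  then show ?thesis using assms unfolding Z_def by auto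
qed

lemma Cset_sub:
  fixes M :: "'x::polish_space measure" and N :: "'y::polish_space measure"
    and M' :: "'x2::polish_space measure" and N' :: "'y2::polish_space measure"
    and a :: "'g::{countable,group_add} \<Rightarrow> 'x \<Rightarrow> 'x"
  assumes am: "pmp_action M a" and bn: "pmp_action N b"
    and am2: "pmp_action M' a'" and bn2: "pmp_action N' b'"
    and wM: "weak_equiv M a M' a'" and wN: "weak_equiv N b N' b'"
    and S: "finite S" and k: "k > 0"
  shows "Cset (M' \<Otimes>\<^sub>M N') (prod_act a' b') S k \<subseteq> Cset (M \<Otimes>\<^sub>M N) (prod_act a b) S k"
  unfolding Cset_def[of "M' \<Otimes>\<^sub>M N'"]
proof (rule closure_minimal)
  show "closed (Cset (M \<Otimes>\<^sub>M N) (prod_act a b) S k)" unfolding Cset_def by simp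
  show "MatP M' a' N' b' S k ` Meas k (M' \<Otimes>\<^sub>M N') \<subseteq> Cset (M \<Otimes>\<^sub>M N) (prod_act a b) S k"
  proof
    fix w assume "w \<in> MatP M' a' N' b' S k ` Meas k (M' \<Otimes>\<^sub>M N')"
    then obtain f where f: "f \<in> Meas k (M' \<Otimes>\<^sub>M N')" "w = MatP M' a' N' b' S k f" by blast
    have "w \<in> closure (Cset (M \<Otimes>\<^sub>M N) (prod_act a b) S k)"
    proof (rule dist_inf_closure[where S=S and k=k])
      fix \<delta> :: real assume d: "\<delta> > 0"
      obtain n f'' where nf: "n > 0" "f'' \<in> Step k n M' N'"
        "dist_inf S k (MatP M' a' N' b' S k f) (MatP M' a' N' b' S k f'') < \<delta>/2"
        using dense_step[OF am2 bn2 f(1) k S, of "\<delta>/2"] d by auto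
      have "MatP M' a' N' b' S k f'' \<in> closure (MatP M a N b S k ` Step k n M N)"
        by (rule subsetD[OF step_closure[OF am2 bn2 am bn weak_equiv_sym[OF wM] weak_equiv_sym[OF wN] S nf(1)]])
          (rule imageI[OF nf(2)])
      moreover have d2: "\<delta>/2 > 0" using d by simp
      ultimately obtain c0 where c0: "c0 \<in> MatP M a N b S k ` Step k n M N"
        "dist_inf S k (MatP M' a' N' b' S k f'') c0 < \<delta>/2"
        using closure_dist_inf[OF S] by metis
      obtain f3 where f3: "f3 \<in> Step k n M N" "c0 = MatP M a N b S k f3" using c0(1) by (rule imageE) simp
      have "c0 \<in> MatP M a N b S k ` Meas k (M \<Otimes>\<^sub>M N)" unfolding f3(2)
        by (rule imageI[OF step_meas[OF am bn f3(1)]])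
      then have "c0 \<in> Cset (M \<Otimes>\<^sub>M N) (prod_act a b) S k" unfolding Cset_def
        by (rule closure_subset[THEN subsetD])
      moreover have "dist_inf S k w c0 < \<delta>"
        using dist_inf_tri[OF S, of k w c0 "MatP M' a' N' b' S k f''"] nf(3) c0(2) f(2) by simp
      ultimately show "\<exists>c\<in>Cset (M \<Otimes>\<^sub>M N) (prod_act a b) S k. dist_inf S k w c < \<delta>" by blast
    next
      fix p assume "p \<notin> S \<times> {..<k} \<times> {..<k}"
      then show "w p = 0" using f(2) Mat_zero by simp
    next
      fix c p assume "c \<in> Cset (M \<Otimes>\<^sub>M N) (prod_act a b) S k" "p \<notin> S \<times> {..<k} \<times> {..<k}"
      then show "c p = 0" by (rule Cset_zero)
    qed (rule S)
    then show "w \<in> Cset (M \<Otimes>\<^sub>M N) (prod_act a b) S k" unfolding Cset_def closure_closure .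
  qed
qed



lemma net_transfer:
  fixes M :: "'x::polish_space measure" and N :: "'y::polish_space measure"
    and M' :: "'x2::polish_space measure" and N' :: "'y2::polish_space measure"
    and a :: "'g::{countable,group_add} \<Rightarrow> 'x \<Rightarrow> 'x"
  assumes am: "pmp_action M a" and bn: "pmp_action N b"
    and am2: "pmp_action M' a'" and bn2: "pmp_action N' b'"
    and wM: "weak_equiv M a M' a'" and wN: "weak_equiv N b N' b'"
    and S: "finite S" and k: "k > 0" and n: "n > 0"
    and net: "step_net M a N b S k \<epsilon> n"
  shows "step_net M' a' N' b' S k \<epsilon> n"
  unfolding step_net_def is_net_def
proof
  fix w assume w: "w \<in> Cset (M' \<Otimes>\<^sub>M N') (prod_act a' b') S k"
  have "w \<in> Cset (M \<Otimes>\<^sub>M N) (prod_act a b) S k"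
    by (rule subsetD[OF Cset_sub[OF am bn am2 bn2 wM wN S k] w])
  then obtain a0 where a0: "a0 \<in> MatP M a N b S k ` Step k n M N" "dist_inf S k w a0 < \<epsilon>"
    using net unfolding step_net_def is_net_def by blast
  have "a0 \<in> closure (MatP M' a' N' b' S k ` Step k n M' N')"
    by (rule subsetD[OF step_closure[OF am bn am2 bn2 wM wN S n] a0(1)])
  moreover have "\<epsilon> - dist_inf S k w a0 > 0" using a0(2) by simp
  ultimately obtain a1 where a1: "a1 \<in> MatP M' a' N' b' S k ` Step k n M' N'"
    "dist_inf S k a0 a1 < \<epsilon> - dist_inf S k w a0"
    using closure_dist_inf[OF S] by metis
  have "dist_inf S k w a1 < \<epsilon>"
    using dist_inf_tri[OF S, of k w a1 a0] a1(2) by simp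
  then show "\<exists>a1\<in>MatP M' a' N' b' S k ` Step k n M' N'. dist_inf S k w a1 < \<epsilon>"
    using a1(1) by blast
qed



lemma Mat_bounds:
  assumes "prob_space M"
  shows "0 \<le> Mat M a S k f p" "Mat M a S k f p \<le> 1"
proof -
  interpret prob_space M by fact
  obtain g i j where p: "p = (g, i, j)" by (cases p)
  show "0 \<le> Mat M a S k f p" "Mat M a S k f p \<le> 1" unfolding p Mat_def by auto
qed

lemma exists_net:
  fixes M :: "'x::polish_space measure" and N :: "'y::polish_space measure"
    and a :: "'g::{countable,group_add} \<Rightarrow> 'x \<Rightarrow> 'x"
  assumes am: "pmp_action M a" and bn: "pmp_action N b"
    and S: "finite S" and k: "k > 0" and e: "\<epsilon> > 0"
  shows "\<exists>n>0. step_net M a N b S k \<epsilon> n"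
proof -
  define P where "P = M \<Otimes>\<^sub>M N"
  have Pp: "prob_space P" unfolding P_def by (rule pair_prob[OF am bn])
  define D where "D = S \<times> {..<k} \<times> {..<k}"
  have finD: "finite D" unfolding D_def using S by simp
  define m :: nat where "m = nat \<lceil>4 / \<epsilon>\<rceil> + 1"
  have m0: "real m > 0" unfolding m_def by simp
  have "real m > 4 / \<epsilon>" unfolding m_def by linarith
  then have m1: "1 / real m < \<epsilon> / 4" using e m0 by (simp add: field_simps)
  define r where "r u = (\<lambda>p. if p \<in> D then \<lfloor>u p * real m\<rfloor> else 0)" for u :: "'g \<times> nat \<times> nat \<Rightarrow> real"
  define Fin where "Fin = {w :: 'g \<times> nat \<times> nat \<Rightarrow> int. \<forall>p. (p \<in> D \<longrightarrow> w p \<in> {0..int m}) \<and> (p \<notin> D \<longrightarrow> w p = 0)}"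
  have finF: "finite Fin" unfolding Fin_def by (rule finite_set_of_finite_funs[OF finD]) simp
  define Rset where "Rset = r ` (MatP M a N b S k ` Meas k P)"
  have "Rset \<subseteq> Fin"
  proof
    fix w assume "w \<in> Rset"
    then obtain f where w: "w = r (MatP M a N b S k f)" unfolding Rset_def P_def by blast
    have "w p \<in> {0..int m}" if "p \<in> D" for p
    proof -
      have b0: "0 \<le> MatP M a N b S k f p" "MatP M a N b S k f p \<le> 1"
        using Mat_bounds[OF Pp, of "prod_act a b" S k f p] unfolding P_def by auto
      have "0 \<le> MatP M a N b S k f p * real m" using b0 by simp
      moreover have "MatP M a N b S k f p * real m \<le> real m"
        using b0 by (simp add: mult_left_le_one_le)
      ultimately show ?thesis using that unfolding w r_def by (simp add: floor_le_iff le_floor_iff)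
    qed
    then show "w \<in> Fin" unfolding Fin_def w r_def by auto
  qed
  then have finR: "finite Rset" using finF finite_subset by blast
  have close: "dist_inf S k u v < \<epsilon> / 4" if "r u = r v" for u v
  proof -
    have "dist_inf S k u v < 1 / real m"
    proof (rule dist_inf_lessI[OF S])
      show "0 < 1 / real m" using m0 by simp
      fix p assume p: "p \<in> S \<times> {..<k} \<times> {..<k}"
      then have "\<lfloor>u p * real m\<rfloor> = \<lfloor>v p * real m\<rfloor>"
        using fun_cong[OF that, of p] unfolding r_def D_def by simp
      then have "\<bar>u p * real m - v p * real m\<bar> < 1" by linarith
      then have "\<bar>u p - v p\<bar> * real m < 1" by (simp add: left_diff_distrib[symmetric] abs_mult)
      then show "\<bar>u p - v p\<bar> < 1 / real m" using m0 by (simp add: field_simps)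
    qed
    then show ?thesis using m1 by simp
  qed
  have "\<forall>\<rho>\<in>Rset. \<exists>n. n > 0 \<and> (\<exists>f\<in>Meas k P. r (MatP M a N b S k f) = \<rho> \<and>
      (\<exists>f'\<in>Step k n M N. dist_inf S k (MatP M a N b S k f) (MatP M a N b S k f') < \<epsilon> / 4))"
  proof
    fix \<rho> assume "\<rho> \<in> Rset"
    then obtain f where f: "f \<in> Meas k P" "\<rho> = r (MatP M a N b S k f)" unfolding Rset_def by blast
    obtain n f' where "n > 0" "f' \<in> Step k n M N"
      "dist_inf S k (MatP M a N b S k f) (MatP M a N b S k f') < \<epsilon> / 4"
      using dense_step[OF am bn f(1)[unfolded P_def] k S, of "\<epsilon>/4"] e by auto
    then show "\<exists>n. n > 0 \<and> (\<exists>f\<in>Meas k P. r (MatP M a N b S k f) = \<rho> \<and>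
      (\<exists>f'\<in>Step k n M N. dist_inf S k (MatP M a N b S k f) (MatP M a N b S k f') < \<epsilon> / 4))"
      using f by blast
  qed
  then obtain nf where nf: "\<forall>\<rho>\<in>Rset. nf \<rho> > 0 \<and> (\<exists>f\<in>Meas k P. r (MatP M a N b S k f) = \<rho> \<and>
      (\<exists>f'\<in>Step k (nf \<rho>) M N. dist_inf S k (MatP M a N b S k f) (MatP M a N b S k f') < \<epsilon> / 4))"
    using bchoice by metis
  define Nn where "Nn = Max (insert 1 (nf ` Rset))"
  have "1 \<le> Nn" unfolding Nn_def using finR by (intro Max_ge) auto
  then have Nn0: "Nn > 0" by simp
  have Nnge: "nf \<rho> \<le> Nn" if "\<rho> \<in> Rset" for \<rho> unfolding Nn_def using finR that by simp
  have "step_net M a N b S k \<epsilon> Nn"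
    unfolding step_net_def is_net_def
  proof
    fix w assume w: "w \<in> Cset (M \<Otimes>\<^sub>M N) (prod_act a b) S k"
    have e4: "\<epsilon> / 4 > 0" using e by simp
    obtain c where c: "c \<in> MatP M a N b S k ` Meas k P" "dist_inf S k w c < \<epsilon> / 4"
      using closure_dist_inf[OF S w[unfolded Cset_def] e4] unfolding P_def by blast
    obtain f0 where f0: "f0 \<in> Meas k P" "c = MatP M a N b S k f0" using c(1) by blast
    define \<rho> where "\<rho> = r c"
    have \<rho>: "\<rho> \<in> Rset" unfolding Rset_def \<rho>_def using c(1) by blast
    then obtain f f' where ff: "f \<in> Meas k P" "r (MatP M a N b S k f) = \<rho>" "f' \<in> Step k (nf \<rho>) M N"
      "dist_inf S k (MatP M a N b S k f) (MatP M a N b S k f') < \<epsilon> / 4"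
      using nf by blast
    have f'N: "f' \<in> Step k Nn M N" by (rule step_mono[OF am bn ff(3) Nnge[OF \<rho>] k])
    have d2: "dist_inf S k c (MatP M a N b S k f) < \<epsilon> / 4"
      by (rule close) (use ff(2) in \<open>simp add: \<rho>_def\<close>)
    have "dist_inf S k w (MatP M a N b S k f') \<le> dist_inf S k w c + dist_inf S k c (MatP M a N b S k f')"
      by (rule dist_inf_tri[OF S])
    also have "\<dots> \<le> dist_inf S k w c + (dist_inf S k c (MatP M a N b S k f) + dist_inf S k (MatP M a N b S k f) (MatP M a N b S k f'))"
      using dist_inf_tri[OF S, of k c "MatP M a N b S k f'" "MatP M a N b S k f"] by simp
    also have "\<dots> < \<epsilon>" using c(2) d2 ff(4) e by linarith
    finally show "\<exists>a\<in>MatP M a N b S k ` Step k Nn M N. dist_inf S k w a < \<epsilon>"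
      using f'N by blast
  qed
  then show ?thesis using Nn0 by blast
qed


theorem mainTheorem6:
  fixes \<alpha> :: "'g::{group_add,countable,infinite} \<Rightarrow> 'x::polish_space \<Rightarrow> 'x"
    and \<mu> :: "'x measure"
    and \<beta> :: "'g \<Rightarrow> 'y::polish_space \<Rightarrow> 'y"
    and \<nu> :: "'y measure"
    and S :: "'g set" and k :: nat and \<epsilon> :: real
  assumes "pmp_action \<mu> \<alpha>" and "pmp_action \<nu> \<beta>"
    and "finite S" and "k > 0" and "\<epsilon> > 0"
  shows "(\<exists>n>0. step_net \<mu> \<alpha> \<nu> \<beta> S k \<epsilon> n) \<and>
    (\<forall>(\<mu>' :: 'x2::polish_space measure) \<alpha>' (\<nu>' :: 'y2::polish_space measure) \<beta>'.
       pmp_action \<mu>' \<alpha>' \<and> pmp_action \<nu>' \<beta>' \<and>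
       weak_equiv \<mu> \<alpha> \<mu>' \<alpha>' \<and> weak_equiv \<nu> \<beta> \<nu>' \<beta>' \<longrightarrow>
       Nsk \<mu> \<alpha> \<nu> \<beta> S k \<epsilon> = Nsk \<mu>' \<alpha>' \<nu>' \<beta>' S k \<epsilon>)"
proof (intro conjI allI impI)
  show "\<exists>n>0. step_net \<mu> \<alpha> \<nu> \<beta> S k \<epsilon> n"
    by (rule exists_net[OF assms])
next
  fix \<mu>' :: "'x2::polish_space measure" and \<alpha>' and \<nu>' :: "'y2::polish_space measure" and \<beta>'
  assume H: "pmp_action \<mu>' \<alpha>' \<and> pmp_action \<nu>' \<beta>' \<and>
       weak_equiv \<mu> \<alpha> \<mu>' \<alpha>' \<and> weak_equiv \<nu> \<beta> \<nu>' \<beta>'"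
  then have am2: "pmp_action \<mu>' \<alpha>'" and bn2: "pmp_action \<nu>' \<beta>'"
    and wM: "weak_equiv \<mu> \<alpha> \<mu>' \<alpha>'" and wN: "weak_equiv \<nu> \<beta> \<nu>' \<beta>'" by auto
  have eq: "(n > 0 \<and> step_net \<mu> \<alpha> \<nu> \<beta> S k \<epsilon> n) = (n > 0 \<and> step_net \<mu>' \<alpha>' \<nu>' \<beta>' S k \<epsilon> n)" for n
  proof (cases "n > 0")
    case True
    have "step_net \<mu> \<alpha> \<nu> \<beta> S k \<epsilon> n \<Longrightarrow> step_net \<mu>' \<alpha>' \<nu>' \<beta>' S k \<epsilon> n"
      by (rule net_transfer[OF assms(1,2) am2 bn2 wM wN assms(3,4) True])
    moreover have "step_net \<mu>' \<alpha>' \<nu>' \<beta>' S k \<epsilon> n \<Longrightarrow> step_net \<mu> \<alpha> \<nu> \<beta> S k \<epsilon> n"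
      by (rule net_transfer[OF am2 bn2 assms(1,2) weak_equiv_sym[OF wM] weak_equiv_sym[OF wN] assms(3,4) True])
    ultimately show ?thesis using True by blast
  qed simp
  show "Nsk \<mu> \<alpha> \<nu> \<beta> S k \<epsilon> = Nsk \<mu>' \<alpha>' \<nu>' \<beta>' S k \<epsilon>"
    unfolding Nsk_def eq ..
qed

end
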